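(* Let $k\ge3$ and let $\mathcal X\subset\mathbb R$ be a finite set (with distance $d(x,y)=|x-y|$) having a convex-nice $k$-clustering $\mathcal C=\{C_1,\ldots,C_k\}$. Then for every integer $\ell$ with $1\le\ell\le\min_i|C_i|$ there exists an ordering of $\mathcal X$ such that the final centers of sequential $\ell$-means run on this ordering do not induce a refinement of $\mathcal C$.
   Context: A clustering of $\mathcal X$ is a set of nonempty, pairwise disjoint subsets whose union is $\mathcal X$; a $k$-clustering has exactly $k$ clusters. A clustering $\mathcal C=\{C_1,\ldots,C_k\}$ is convex-nice if for any $i\ne j$, any $x,y$ in the convex hull of $C_i$ and any $z$ in the convex hull of $C_j$, $d(y,x)<d(z,x)$. A list $T=(t_1,\ldots,t_m)$ induces the clustering of $\mathcal X$ assigning each $x$ to the index $i$ minimizing $|x-t_i|$ (ties by smallest $i$), empty clusters discarded. $\mathcal C$ is a refinement of $\mathcal C'$ if $x\sim_{\mathcal C}y$ implies $x\sim_{\mathcal C'}y$, where $x\sim_{\mathcal C}y$ means $x,y$ lie in the same cluster of $\mathcal C$. Sequential $\ell$-means on input sequence $x_1,\ldots,x_N$: set $t_i=x_i$, $n_i=1$ for $i=1,\ldots,\ell$; for each subsequent point $x$: let $i$ be the index of the closest center (ties by smallest index), increment $n_i$, and replace $t_i$ by $t_i+(1/n_i)(x-t_i)$. Output the final $(t_1,\ldots,t_\ell)$. *)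

theory Defs
  imports "HOL-Analysis.Analysis"
begin

definition is_clustering :: "real set \<Rightarrow> real set set \<Rightarrow> bool" where
  "is_clustering X Cs \<longleftrightarrow>
     (\<forall>C\<in>Cs. C \<noteq> {}) \<and>
     (\<forall>C\<in>Cs. \<forall>D\<in>Cs. C \<noteq> D \<longrightarrow> C \<inter> D = {}) \<and>
     \<Union>Cs = X"

definition convex_nice :: "real set set \<Rightarrow> bool" where
  "convex_nice Cs \<longleftrightarrow>
     (\<forall>Ci\<in>Cs. \<forall>Cj\<in>Cs. Ci \<noteq> Cj \<longrightarrow>
        (\<forall>x\<in>convex hull Ci. \<forall>y\<in>convex hull Ci. \<forall>z\<in>convex hull Cj.
           dist y x < dist z x))"

definition same_cluster :: "real set set \<Rightarrow> real \<Rightarrow> real \<Rightarrow> bool" where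
  "same_cluster Cs x y \<longleftrightarrow> (\<exists>C\<in>Cs. x \<in> C \<and> y \<in> C)"

definition refines :: "real set set \<Rightarrow> real set set \<Rightarrow> bool" where
  "refines Cs Cs' \<longleftrightarrow> (\<forall>x y. same_cluster Cs x y \<longrightarrow> same_cluster Cs' x y)"

definition closest_idx :: "real list \<Rightarrow> real \<Rightarrow> nat" where
  "closest_idx T x = (LEAST i. i < length T \<and> (\<forall>j<length T. \<bar>x - T ! i\<bar> \<le> \<bar>x - T ! j\<bar>))"

definition induced_clustering :: "real set \<Rightarrow> real list \<Rightarrow> real set set" where
  "induced_clustering X T =
     {{x \<in> X. closest_idx T x = i} | i. i < length T} - {{}}"

text \<open>One step of sequential means: state = (centers, counts).\<close>
definition seq_step :: "real list \<times> nat list \<Rightarrow> real \<Rightarrow> real list \<times> nat list" where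
  "seq_step st x = (let T = fst st; n = snd st; i = closest_idx T x; ni = n ! i + 1 in
      (T[i := T ! i + (1 / real ni) * (x - T ! i)], n[i := ni]))"

definition seq_means :: "nat \<Rightarrow> real list \<Rightarrow> real list" where
  "seq_means l xs = fst (foldl seq_step (take l xs, replicate l 1) (drop l xs))"

end

theory Submission imports Defs begin

lemma closest_idx_prop:
  assumes "T \<noteq> []"
  shows "closest_idx T x < length T \<and> (\<forall>j<length T. \<bar>x - T ! closest_idx T x\<bar> \<le> \<bar>x - T ! j\<bar>)"
proof -
  have fin: "finite (set T)" "set T \<noteq> {}" using assms by auto
  define M where "M = Min ((\<lambda>t. \<bar>x - t\<bar>) ` set T)"
  have "M \<in> (\<lambda>t. \<bar>x - t\<bar>) ` set T" unfolding M_def using fin by (intro Min_in) auto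
  then obtain m where m1: "m \<in> set T" "\<bar>x - m\<bar> = M" by blast
  have m2: "\<forall>t\<in>set T. \<bar>x - m\<bar> \<le> \<bar>x - t\<bar>" unfolding m1(2) M_def using fin by auto
  note m = m1(1) m2
  then obtain i where i: "i < length T" "T ! i = m" by (meson in_set_conv_nth)
  have "\<exists>i. i < length T \<and> (\<forall>j<length T. \<bar>x - T ! i\<bar> \<le> \<bar>x - T ! j\<bar>)"
    using i m by (metis nth_mem)
  then show ?thesis unfolding closest_idx_def by (rule LeastI_ex)
qed

lemma closest_idx_unique:
  assumes "j < length T" "\<forall>i<length T. i \<noteq> j \<longrightarrow> \<bar>x - T ! j\<bar> < \<bar>x - T ! i\<bar>"
  shows "closest_idx T x = j"
proof -
  have ne: "T \<noteq> []" using assms by auto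
  from closest_idx_prop[OF ne, of x] assms show ?thesis by force
qed

lemma fold_inv:
  fixes l :: nat
  assumes "1 \<le> l"
  shows "length T = l \<Longrightarrow> length n = l \<Longrightarrow> (\<forall>i<l-1. T!i < T!(l-1)) \<Longrightarrow>
    (\<forall>y\<in>set ys. T!(l-1) \<le> y) \<Longrightarrow> sorted ys \<Longrightarrow>
    length (fst (foldl seq_step (T,n) ys)) = l \<and>
    (\<forall>i<l-1. fst (foldl seq_step (T,n) ys) ! i = T ! i \<and>
       fst (foldl seq_step (T,n) ys) ! i < fst (foldl seq_step (T,n) ys) ! (l-1))"
proof (induction ys arbitrary: T n)
  case Nil
  then show ?case by simp
next
  case (Cons y ys)
  have ci: "closest_idx T y = l - 1"
  proof (rule closest_idx_unique)
    show "l - 1 < length T" using Cons assms by simp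
    show "\<forall>i<length T. i \<noteq> l - 1 \<longrightarrow> \<bar>y - T ! (l - 1)\<bar> < \<bar>y - T ! i\<bar>"
      using Cons.prems by (auto, subgoal_tac "i < l - 1", force, linarith)
  qed
  define c where "c = 1 / real (n ! (l-1) + 1)"
  have c: "0 \<le> c" "c \<le> 1" unfolding c_def by (auto simp: field_simps)
  define t where "t = T!(l-1) + c * (y - T!(l-1))"
  have st: "seq_step (T,n) y = (T[l-1 := t], n[l-1 := n!(l-1)+1])"
    unfolding seq_step_def Let_def t_def c_def by (simp add: ci)
  have yge: "T!(l-1) \<le> y" using Cons.prems by simp
  have t1: "T!(l-1) \<le> t" unfolding t_def using c yge by simp
  have t2: "t \<le> y" unfolding t_def using c yge
    by (smt (verit) mult_left_le_one_le)
  have L: "l - 1 < length T" using Cons.prems assms by simp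
  have IH: "length (fst (foldl seq_step (T[l-1 := t], n[l-1 := n!(l-1)+1]) ys)) = l \<and>
    (\<forall>i<l-1. fst (foldl seq_step (T[l-1 := t], n[l-1 := n!(l-1)+1]) ys) ! i = T[l-1 := t] ! i \<and>
       fst (foldl seq_step (T[l-1 := t], n[l-1 := n!(l-1)+1]) ys) ! i < fst (foldl seq_step (T[l-1 := t], n[l-1 := n!(l-1)+1]) ys) ! (l-1))"
  proof (rule Cons.IH)
    show "length (T[l - 1 := t]) = l" using Cons.prems by simp
    show "length (n[l - 1 := n ! (l - 1) + 1]) = l" using Cons.prems by simp
    show "\<forall>i<l - 1. T[l - 1 := t] ! i < T[l - 1 := t] ! (l - 1)"
      using Cons.prems L t1 by auto
    show "\<forall>ya\<in>set ys. T[l - 1 := t] ! (l - 1) \<le> ya"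
      using Cons.prems L t2 by auto
    show "sorted ys" using Cons.prems by simp
  qed
  show ?case using IH st by auto
qed

theorem mainTheorem11:
  fixes X :: "real set" and Cs :: "real set set" and k l :: nat
  assumes "k \<ge> 3"
    and "finite X"
    and "is_clustering X Cs"
    and "card Cs = k"
    and "convex_nice Cs"
    and "1 \<le> l"
    and "\<forall>C\<in>Cs. l \<le> card C"
  shows "\<exists>xs. distinct xs \<and> set xs = X \<and>
           \<not> refines (induced_clustering X (seq_means l xs)) Cs"
proof -
  define xs where "xs = sorted_list_of_set X"
  have xsd: "distinct xs" "set xs = X" "sorted xs" using assms(2) unfolding xs_def by auto
  have sw: "sorted_wrt (<) xs" using assms(2) unfolding xs_def by simp
  have lt: "\<And>i j. i < j \<Longrightarrow> j < length xs \<Longrightarrow> xs!i < xs!j"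
    using sw by (simp add: sorted_wrt_iff_nth_less)
  have cl: "\<forall>C\<in>Cs. C \<noteq> {}" "\<forall>C\<in>Cs. \<forall>D\<in>Cs. C \<noteq> D \<longrightarrow> C \<inter> D = {}" "\<Union>Cs = X"
    using assms(3) unfolding is_clustering_def by auto
  have "Cs \<noteq> {}" using assms(1,4) by auto
  then obtain C0 where C0: "C0 \<in> Cs" by auto
  have "card C0 \<le> card X" using C0 cl(3) assms(2) by (metis Union_upper card_mono)
  hence lenX: "l \<le> length xs" using C0 assms(7) xsd distinct_card by fastforce
  define T where "T = seq_means l xs"
  have F: "length T = l \<and> (\<forall>i<l-1. T ! i = take l xs ! i \<and> T ! i < T ! (l-1))"
    unfolding T_def seq_means_def
  proof (rule fold_inv[OF assms(6)])
    show "length (take l xs) = l" using lenX by simp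
    show "length (replicate l (1::nat)) = l" by simp
    show "\<forall>i<l - 1. take l xs ! i < take l xs ! (l - 1)" using lenX lt assms(6) by auto
    show "\<forall>y\<in>set (drop l xs). take l xs ! (l - 1) \<le> y"
    proof
      fix y assume "y \<in> set (drop l xs)"
      then obtain j where j: "j < length xs - l" "y = xs ! (l + j)"
        by (auto simp: in_set_conv_nth)
      have "xs!(l-1) < xs!(l+j)" using lt[of "l-1" "l+j"] j assms(6) by simp
      thus "take l xs ! (l - 1) \<le> y" using j assms(6) by simp
    qed
    show "sorted (drop l xs)" using xsd(3) by (simp add: sorted_wrt_drop)
  qed
  have Tne: "T \<noteq> []" using F assms(6) by auto
  define R where "R = set (drop (l-1) xs)"
  have idx: "closest_idx T x = l - 2 \<or> closest_idx T x = l - 1" if x: "x \<in> R" for x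
  proof -
    obtain j where j0: "j < length (drop (l-1) xs)" "x = drop (l-1) xs ! j"
      using x unfolding R_def by (auto simp: in_set_conv_nth)
    have j: "l - 1 + j < length xs" "x = xs ! (l - 1 + j)" using j0 lenX by auto
    have xg: "xs!i < x" if "i < l - 1" for i using lt[of i "l-1+j"] j that by simp
    obtain c where c: "c = closest_idx T x" by simp
    have cp: "c < l" "\<forall>j<l. \<bar>x - T ! c\<bar> \<le> \<bar>x - T ! j\<bar>"
      using closest_idx_prop[OF Tne, of x] F c by auto
    have "\<not> c < l - 2"
    proof
      assume a: "c < l - 2"
      have "T!c = xs!c" "T!(l-2) = xs!(l-2)" using F a lenX by auto
      moreover have "xs!c < xs!(l-2)" using lt[of c "l-2"] a lenX by simp
      moreover have "xs!(l-2) < x" using xg[of "l-2"] a by simp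
      moreover have "\<bar>x - T ! c\<bar> \<le> \<bar>x - T ! (l-2)\<bar>" using cp a by simp
      ultimately show False by simp
    qed
    thus ?thesis using cp c by linarith
  qed
  have meet: "C \<inter> R \<noteq> {}" if C: "C \<in> Cs" for C
  proof
    assume e: "C \<inter> R = {}"
    have "C \<subseteq> X" using C cl(3) by auto
    moreover have "set xs = set (take (l-1) xs) \<union> R" unfolding R_def
      by (metis append_take_drop_id set_append)
    ultimately have "C \<subseteq> set (take (l-1) xs)" using e xsd(2) by blast
    hence "card C \<le> card (set (take (l-1) xs))" by (simp add: card_mono)
    also have "\<dots> \<le> l - 1" by (metis card_length length_take min.bounded_iff order.trans order_refl)
    finally show False using assms(6,7) C by fastforce
  qed
  obtain C1 C2 C3 where C: "C1 \<in> Cs" "C2 \<in> Cs" "C3 \<in> Cs" "C1 \<noteq> C2" "C1 \<noteq> C3" "C2 \<noteq> C3"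
  proof -
    have "3 \<le> card Cs" using assms by simp
    then obtain A where "A \<subseteq> Cs" "card A = 3" by (meson obtain_subset_with_card_n)
    then obtain a b c where "A = {a,b,c}" "a \<noteq> b" "a \<noteq> c" "b \<noteq> c" by (metis card_3_iff)
    then show ?thesis using that[of a b c] \<open>A \<subseteq> Cs\<close> by simp
  qed
  obtain r1 where r1: "r1 \<in> C1 \<inter> R" using meet[OF C(1)] by blast
  obtain r2 where r2: "r2 \<in> C2 \<inter> R" using meet[OF C(2)] by blast
  obtain r3 where r3: "r3 \<in> C3 \<inter> R" using meet[OF C(3)] by blast
  note r = r1 r2 r3
  have key: "\<exists>r s Ci Cj. Ci \<in> Cs \<and> Cj \<in> Cs \<and> Ci \<noteq> Cj \<and> r \<in> Ci \<and> s \<in> Cj \<and> r \<in> R \<and> s \<in> R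
     \<and> closest_idx T r = closest_idx T s"
  proof -
    have i1: "closest_idx T r1 = l - 2 \<or> closest_idx T r1 = l - 1" using idx r1 by simp
    have i2: "closest_idx T r2 = l - 2 \<or> closest_idx T r2 = l - 1" using idx r2 by simp
    have i3: "closest_idx T r3 = l - 2 \<or> closest_idx T r3 = l - 1" using idx r3 by simp
    have "closest_idx T r1 = closest_idx T r2 \<or> closest_idx T r1 = closest_idx T r3 \<or> closest_idx T r2 = closest_idx T r3"
      using i1 i2 i3 by linarith
    then show ?thesis
    proof (elim disjE)
      assume "closest_idx T r1 = closest_idx T r2" thus ?thesis using r1 r2 C by (intro exI[of _ r1] exI[of _ r2] exI[of _ C1] exI[of _ C2]) simp
    next
      assume "closest_idx T r1 = closest_idx T r3" thus ?thesis using r1 r3 C by (intro exI[of _ r1] exI[of _ r3] exI[of _ C1] exI[of _ C3]) simp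
    next
      assume "closest_idx T r2 = closest_idx T r3" thus ?thesis using r2 r3 C by (intro exI[of _ r2] exI[of _ r3] exI[of _ C2] exI[of _ C3]) simp
    qed
  qed
  then obtain r s Ci Cj where rs: "Ci \<in> Cs" "Cj \<in> Cs" "Ci \<noteq> Cj" "r \<in> Ci" "s \<in> Cj" "r \<in> R" "s \<in> R"
     "closest_idx T r = closest_idx T s" by blast
  have rX: "r \<in> X" "s \<in> X" using rs cl(3) by auto
  have ct: "closest_idx T r < length T" using closest_idx_prop[OF Tne] by blast
  define G where "G = {x \<in> X. closest_idx T x = closest_idx T r}"
  have G1: "G \<in> {{x \<in> X. closest_idx T x = i} | i. i < length T}"
  proof -
    have "\<exists>i. G = {x \<in> X. closest_idx T x = i} \<and> i < length T"
      using ct G_def by blast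
    thus ?thesis by (simp only: mem_Collect_eq)
  qed
  have rG: "r \<in> G" "s \<in> G" unfolding G_def using rX rs(8) by auto
  have G2: "G \<notin> {{}}" using rG by auto
  have GI: "G \<in> induced_clustering X T" unfolding induced_clustering_def using G1 G2 by (rule DiffI)
  have s1: "same_cluster (induced_clustering X T) r s"
    unfolding same_cluster_def using GI rG by (intro bexI[of _ G]) simp_all
  have s2: "\<not> same_cluster Cs r s"
  proof
    assume "same_cluster Cs r s"
    then obtain D where D: "D \<in> Cs" "r \<in> D" "s \<in> D" unfolding same_cluster_def by blast
    have "D = Ci"
    proof (rule ccontr)
      assume "D \<noteq> Ci"
      hence "D \<inter> Ci = {}" using cl(2) D(1) rs(1) by simp
      thus False using D(2) rs(4) by blast
    qed
    moreover have "D = Cj"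
    proof (rule ccontr)
      assume "D \<noteq> Cj"
      hence "D \<inter> Cj = {}" using cl(2) D(1) rs(2) by simp
      thus False using D(3) rs(5) by blast
    qed
    ultimately show False using rs by simp
  qed
  have nr: "\<not> refines (induced_clustering X T) Cs" unfolding refines_def using s1 s2 by blast
  show ?thesis using xsd nr unfolding T_def by blast
qed
end
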